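(* Consider the Probabilistic Serial mechanism with $n$ agents and $m \le n$ items. Agent 1 has a strict linear order $\succ_1$ over the items; let $\overline{O}$ be the set of its $k$ most preferred items under $\succ_1$ ($1 \le k \le m$). Fix arbitrary reported strict linear orders of agents $2,\dots,n$, and consider the truthful run in which agent 1 reports $\succ_1$. Let $T$ be the time at which the last item of $\overline{O}$ is exhausted in this run, and suppose $\tfrac12 \le T < \tfrac23$. Suppose there is an item $o^* \in \overline{O}$ of which agent 1 receives a positive amount such that, at the moment $o^*$ is exhausted, the agents eating $o^*$ are exactly agent 1 and one other agent (agent 2). Let $t_1$ be the time at which agent 1 starts eating $o^*$, let $t_2$ be the length of time agent 1 spends eating $o^*$ (so $o^*$ is exhausted at time $t_1+t_2$), and let $t_3 = T - t_1 - t_2$. Then $$t_1 + t_2 \ge \tfrac12,\quad t_3 < \tfrac16,\quad t_1 < \tfrac13,\quad t_2 > 2t_3.$$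
   Context: Probabilistic Serial: there are $n$ agents and $m$ divisible items of unit supply; each agent reports a strict linear order over all items. Starting at time $0$, every agent consumes at rate $1$ per unit time its most preferred item (according to its report) among those with positive remaining supply; when an item is exhausted, agents consuming it move to their most preferred item still available; this continues until all items are exhausted. *)

theory Defs
  imports Complex_Main
begin

text \<open>Agents are 0..<n (agent 0 plays the role of "agent 1" of the paper),
  items are 0..<m.  A report of agent i is a list P i enumerating all items
  from most to least preferred.  The run is computed event by event:
  a state is (current time, remaining supply of each item).\<close>

definition ps_top :: "nat list \<Rightarrow> nat set \<Rightarrow> nat" where
  "ps_top p A = hd (filter (\<lambda>j. j \<in> A) p)"

fun ps_state :: "nat \<Rightarrow> nat \<Rightarrow> (nat \<Rightarrow> nat list) \<Rightarrow> nat \<Rightarrow> real \<times> (nat \<Rightarrow> real)" where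
  "ps_state n m P 0 = (0, \<lambda>j. if j < m then 1 else 0)"
| "ps_state n m P (Suc k) =
     (let (t, s) = ps_state n m P k;
          A = {j. j < m \<and> 0 < s j};
          c = (\<lambda>j. card {i. i < n \<and> ps_top (P i) A = j});
          d = Min ((\<lambda>j. s j / real (c j)) ` {j \<in> A. 0 < c j})
      in if A = {} then (t, s)
         else (t + d, \<lambda>j. if j \<in> A then s j - real (c j) * d else s j))"

text \<open>Time at which event step k starts (t_0 = 0, t_1, ... are exhaustion times).\<close>
definition ps_time :: "nat \<Rightarrow> nat \<Rightarrow> (nat \<Rightarrow> nat list) \<Rightarrow> nat \<Rightarrow> real" where
  "ps_time n m P k = fst (ps_state n m P k)"

definition ps_supply :: "nat \<Rightarrow> nat \<Rightarrow> (nat \<Rightarrow> nat list) \<Rightarrow> nat \<Rightarrow> nat \<Rightarrow> real" where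
  "ps_supply n m P k j = snd (ps_state n m P k) j"

definition ps_avail :: "nat \<Rightarrow> nat \<Rightarrow> (nat \<Rightarrow> nat list) \<Rightarrow> nat \<Rightarrow> nat set" where
  "ps_avail n m P k = {j. j < m \<and> 0 < ps_supply n m P k j}"

text \<open>Item eaten by agent i during step k, i.e. on [ps_time k, ps_time (k+1)).\<close>
definition ps_eats :: "nat \<Rightarrow> nat \<Rightarrow> (nat \<Rightarrow> nat list) \<Rightarrow> nat \<Rightarrow> nat \<Rightarrow> nat" where
  "ps_eats n m P k i = ps_top (P i) (ps_avail n m P k)"

definition ps_exh_step :: "nat \<Rightarrow> nat \<Rightarrow> (nat \<Rightarrow> nat list) \<Rightarrow> nat \<Rightarrow> nat" where
  "ps_exh_step n m P j = (LEAST k. ps_supply n m P (Suc k) j \<le> 0)"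

definition ps_exh :: "nat \<Rightarrow> nat \<Rightarrow> (nat \<Rightarrow> nat list) \<Rightarrow> nat \<Rightarrow> real" where
  "ps_exh n m P j = ps_time n m P (Suc (ps_exh_step n m P j))"

text \<open>Amount of item j received by agent i (= total time agent i spends eating j);
  the run terminates after at most m steps.\<close>
definition ps_share :: "nat \<Rightarrow> nat \<Rightarrow> (nat \<Rightarrow> nat list) \<Rightarrow> nat \<Rightarrow> nat \<Rightarrow> real" where
  "ps_share n m P i j =
     (\<Sum>k<m. if ps_eats n m P k i = j then ps_time n m P (Suc k) - ps_time n m P k else 0)"

definition ps_start :: "nat \<Rightarrow> nat \<Rightarrow> (nat \<Rightarrow> nat list) \<Rightarrow> nat \<Rightarrow> nat \<Rightarrow> real" where
  "ps_start n m P i j = ps_time n m P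
      (LEAST k. ps_eats n m P k i = j \<and> ps_time n m P k < ps_time n m P (Suc k))"

end

theory Submission
  imports Defs
begin

definition ps_cnt :: "nat \<Rightarrow> nat \<Rightarrow> (nat \<Rightarrow> nat list) \<Rightarrow> nat \<Rightarrow> nat \<Rightarrow> nat" where
  "ps_cnt n m P k j = card {i. i < n \<and> ps_eats n m P k i = j}"

definition ps_d :: "nat \<Rightarrow> nat \<Rightarrow> (nat \<Rightarrow> nat list) \<Rightarrow> nat \<Rightarrow> real" where
  "ps_d n m P k = Min ((\<lambda>j. ps_supply n m P k j / real (ps_cnt n m P k j)) `
      {j \<in> ps_avail n m P k. 0 < ps_cnt n m P k j})"

lemma ps_top_mono: "ps_top p A = j \<Longrightarrow> j \<in> B \<Longrightarrow> B \<subseteq> A \<Longrightarrow> ps_top p B = j"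
  unfolding ps_top_def by (induction p) auto

lemma ps_top_in: assumes "A \<subseteq> set p" "A \<noteq> {}" shows "ps_top p A \<in> A"
proof -
  have "filter (\<lambda>j. j \<in> A) p \<noteq> []" using assms by (auto simp: filter_empty_conv)
  then have "hd (filter (\<lambda>j. j \<in> A) p) \<in> set (filter (\<lambda>j. j \<in> A) p)" by (rule hd_in_set)
  then show ?thesis unfolding ps_top_def by simp
qed

lemma ps_step: "ps_state n m P (Suc k) = (if ps_avail n m P k = {} then ps_state n m P k
   else (ps_time n m P k + ps_d n m P k, \<lambda>j. if j \<in> ps_avail n m P k
      then ps_supply n m P k j - real (ps_cnt n m P k j) * ps_d n m P k else ps_supply n m P k j))"
proof -
  obtain t s where ts: "ps_state n m P k = (t, s)" by (cases "ps_state n m P k")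
  have e: "ps_time n m P k = t" "ps_supply n m P k = s"
    using ts by (auto simp: ps_time_def ps_supply_def fun_eq_iff)
  let ?A = "{j. j < m \<and> 0 < s j}"
  have A: "ps_avail n m P k = ?A" by (simp add: ps_avail_def e)
  show ?thesis
  proof (cases "?A = {}")
    case True then show ?thesis by (simp only: ps_state.simps ts prod.case Let_def A) simp
  next
    case False then show ?thesis
      by (simp only: ps_state.simps ts prod.case Let_def A if_False ps_d_def ps_cnt_def ps_eats_def e)
  qed
qed

lemma time_Suc: "ps_time n m P (Suc k) = (if ps_avail n m P k = {} then ps_time n m P k
   else ps_time n m P k + ps_d n m P k)"
  by (simp add: ps_step ps_time_def del: ps_state.simps)

lemma supply_Suc: "ps_supply n m P (Suc k) j = (if j \<in> ps_avail n m P k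
      then ps_supply n m P k j - real (ps_cnt n m P k j) * ps_d n m P k else ps_supply n m P k j)"
  by (subst ps_supply_def, subst ps_step) (auto simp: ps_supply_def)

lemma supply_0: "ps_supply n m P 0 j = (if j < m then 1 else 0)"
  by (simp add: ps_supply_def)

lemma time_0: "ps_time n m P 0 = 0"
  by (simp add: ps_time_def)

lemma avail_sub: "ps_avail n m P k \<subseteq> {..<m}"
  by (auto simp: ps_avail_def)

lemma d_props:
  assumes W: "\<forall>i<n. set (P i) = {..<m}" and n: "0 < n" and ne: "ps_avail n m P k \<noteq> {}"
  shows "0 < ps_d n m P k"
    and "\<And>j. j \<in> ps_avail n m P k \<Longrightarrow> 0 < ps_cnt n m P k j \<Longrightarrow>
           ps_d n m P k \<le> ps_supply n m P k j / real (ps_cnt n m P k j)"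
    and "\<exists>j\<in>ps_avail n m P k. 0 < ps_cnt n m P k j \<and>
           ps_d n m P k = ps_supply n m P k j / real (ps_cnt n m P k j)"
proof -
  let ?A = "ps_avail n m P k"
  let ?S = "{j \<in> ?A. 0 < ps_cnt n m P k j}"
  let ?f = "\<lambda>j. ps_supply n m P k j / real (ps_cnt n m P k j)"
  have finA: "finite ?A" by (rule finite_subset[OF avail_sub]) simp
  have fin: "finite ?S" using finA by simp
  define j0 where "j0 = ps_top (P 0) ?A"
  have j0A: "j0 \<in> ?A" unfolding j0_def using ps_top_in[of ?A "P 0"] W n avail_sub[of n m P k] ne by auto
  have "0 \<in> {i. i < n \<and> ps_eats n m P k i = j0}" using n by (simp add: ps_eats_def j0_def)
  then have "0 < ps_cnt n m P k j0" unfolding ps_cnt_def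
    by (subst card_gt_0_iff) auto
  with j0A have Sne: "?S \<noteq> {}" by auto
  have "ps_d n m P k \<in> ?f ` ?S" unfolding ps_d_def using fin Sne by (intro Min_in) auto
  then show "\<exists>j\<in>?A. 0 < ps_cnt n m P k j \<and> ps_d n m P k = ?f j" by auto
  then obtain j where "j \<in> ?A" "0 < ps_cnt n m P k j" "ps_d n m P k = ?f j" by auto
  moreover have "0 < ps_supply n m P k j" using \<open>j \<in> ?A\<close> by (simp add: ps_avail_def)
  ultimately show "0 < ps_d n m P k" by simp
  show "\<And>j. j \<in> ?A \<Longrightarrow> 0 < ps_cnt n m P k j \<Longrightarrow> ps_d n m P k \<le> ?f j"
    unfolding ps_d_def using fin by (intro Min_le) auto
qed

lemma supply_nonneg:
  assumes W: "\<forall>i<n. set (P i) = {..<m}" and n: "0 < n"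
  shows "0 \<le> ps_supply n m P k j"
proof (induction k)
  case 0 then show ?case by (simp add: supply_0)
next
  case (Suc k)
  show ?case
  proof (cases "j \<in> ps_avail n m P k")
    case True
    then have ne: "ps_avail n m P k \<noteq> {}" by auto
    show ?thesis
    proof (cases "ps_cnt n m P k j = 0")
      case True then show ?thesis using Suc by (simp add: supply_Suc)
    next
      case False
      then have c: "0 < real (ps_cnt n m P k j)" by simp
      have "ps_d n m P k \<le> ps_supply n m P k j / real (ps_cnt n m P k j)"
        using d_props(2)[OF W n ne \<open>j \<in> _\<close>] False by simp
      then have "ps_d n m P k * real (ps_cnt n m P k j) \<le> ps_supply n m P k j"
        using c by (simp add: pos_le_divide_eq)
      then show ?thesis using True by (simp add: supply_Suc mult.commute)
    qed
  next
    case False then show ?thesis using Suc by (simp add: supply_Suc)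
  qed
qed

lemma delta_nonneg:
  assumes W: "\<forall>i<n. set (P i) = {..<m}" and n: "0 < n"
  shows "ps_time n m P k \<le> ps_time n m P (Suc k)"
proof (cases "ps_avail n m P k = {}")
  case True then show ?thesis by (simp add: time_Suc)
next
  case False then show ?thesis using d_props(1)[OF W n False] by (simp add: time_Suc)
qed

lemma time_nonneg:
  assumes W: "\<forall>i<n. set (P i) = {..<m}" and n: "0 < n"
  shows "0 \<le> ps_time n m P k"
  by (induction k) (auto simp: time_0 intro: order_trans[OF _ delta_nonneg[OF W n]])

lemma avail_Suc_sub: "ps_avail n m P (Suc k) \<subseteq> ps_avail n m P k"
proof
  fix j assume j: "j \<in> ps_avail n m P (Suc k)"
  show "j \<in> ps_avail n m P k"
  proof (rule ccontr)
    assume "j \<notin> ps_avail n m P k"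
    then have "ps_supply n m P (Suc k) j = ps_supply n m P k j" by (simp add: supply_Suc)
    then show False using j \<open>j \<notin> _\<close> by (simp add: ps_avail_def)
  qed
qed

lemma avail_antimono: "k \<le> k' \<Longrightarrow> ps_avail n m P k' \<subseteq> ps_avail n m P k"
  using lift_Suc_antimono_le[of "ps_avail n m P", OF avail_Suc_sub] by blast

lemma avail_card:
  assumes W: "\<forall>i<n. set (P i) = {..<m}" and n: "0 < n"
  shows "card (ps_avail n m P k) \<le> m - k"
proof (induction k)
  case 0 then show ?case using avail_sub[of n m P 0]
  proof -
    have "card (ps_avail n m P 0) \<le> card {..<m}" by (rule card_mono) (auto simp: ps_avail_def)
    then show ?thesis by simp
  qed
next
  case (Suc k)
  show ?case
  proof (cases "ps_avail n m P k = {}")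
    case True then show ?thesis using avail_Suc_sub[of n m P k] by auto
  next
    case False
    obtain j where j: "j \<in> ps_avail n m P k" "0 < ps_cnt n m P k j"
      "ps_d n m P k = ps_supply n m P k j / real (ps_cnt n m P k j)"
      using d_props(3)[OF W n False] by blast
    have "ps_supply n m P (Suc k) j = 0" using j by (simp add: supply_Suc)
    then have "j \<notin> ps_avail n m P (Suc k)" by (simp add: ps_avail_def)
    then have "ps_avail n m P (Suc k) \<subset> ps_avail n m P k" using j(1) avail_Suc_sub by blast
    moreover have "finite (ps_avail n m P k)" by (rule finite_subset[OF avail_sub]) simp
    ultimately have "card (ps_avail n m P (Suc k)) < card (ps_avail n m P k)"
      by (simp add: psubset_card_mono)
    then show ?thesis using Suc by linarith
  qed
qed

lemma avail_m:
  assumes W: "\<forall>i<n. set (P i) = {..<m}" and n: "0 < n"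
  shows "ps_avail n m P m = {}"
proof -
  have "card (ps_avail n m P m) = 0" using avail_card[OF W n, of m] by simp
  moreover have "finite (ps_avail n m P m)" by (rule finite_subset[OF avail_sub]) simp
  ultimately show ?thesis by simp
qed

theorem lemma3:
  fixes n m k :: nat and P :: "nat \<Rightarrow> nat list" and ostar a :: nat
    and Obar :: "nat set" and T t1 t2 t3 :: real
  assumes "m \<le> n" and "1 \<le> k" and "k \<le> m"
    and "\<forall>i<n. distinct (P i) \<and> set (P i) = {..<m}"
    and Obar_def: "Obar = set (take k (P 0))"
    and T_def: "T = Max (ps_exh n m P ` Obar)"
    and "1/2 \<le> T" and "T < 2/3"
    and "ostar \<in> Obar" and "0 < ps_share n m P 0 ostar"
    and "a < n" and "a \<noteq> 0"
    and "{i. i < n \<and> ps_eats n m P (ps_exh_step n m P ostar) i = ostar} = {0, a}"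
    and t1_def: "t1 = ps_start n m P 0 ostar"
    and t2_def: "t2 = ps_share n m P 0 ostar"
    and t3_def: "t3 = T - t1 - t2"
  shows "t1 + t2 \<ge> 1/2 \<and> t3 < 1/6 \<and> t1 < 1/3 \<and> t2 > 2 * t3"
proof -
  have n: "0 < n" using assms(11) by simp
  have W: "\<forall>i<n. set (P i) = {..<m}" using assms(4) by simp
  have P0: "set (P 0) = {..<m}" using W n by simp
  have om: "ostar < m" using assms(9) P0 unfolding Obar_def by (auto dest: in_set_takeD)
  then have m0: "0 < m" by simp
  let ?A = "ps_avail n m P"
  let ?s = "ps_supply n m P"
  let ?tau = "ps_time n m P"
  let ?eats = "ps_eats n m P"
  define E where "E = ps_exh_step n m P ostar"
  have ex: "?s (Suc (m - 1)) ostar \<le> 0"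
  proof -
    have "ostar \<notin> ?A m" using avail_m[OF W n] by simp
    then have "?s m ostar \<le> 0" using om by (simp add: ps_avail_def not_less)
    then show ?thesis using m0 by simp
  qed
  have sE: "?s (Suc E) ostar \<le> 0" unfolding E_def ps_exh_step_def by (rule LeastI[of "\<lambda>k. ?s (Suc k) ostar \<le> 0" "m - 1", OF ex])
  have Em: "E \<le> m - 1" unfolding E_def ps_exh_step_def by (rule Least_le[of "\<lambda>k. ?s (Suc k) ostar \<le> 0" "m - 1", OF ex])
  have sEpos: "\<not> ?s (Suc k) ostar \<le> 0" if "k < E" for k
    using not_less_Least[of k "\<lambda>k. ?s (Suc k) ostar \<le> 0"] that unfolding E_def ps_exh_step_def by blast
  have inA: "ostar \<in> ?A k" if "k \<le> E" for k
  proof (cases k)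
    case 0 then show ?thesis using om by (simp add: ps_avail_def supply_0)
  next
    case (Suc k') then show ?thesis using sEpos[of k'] that om by (simp add: ps_avail_def)
  qed
  have notinA: "ostar \<notin> ?A k" if "E < k" for k
  proof -
    have "ostar \<notin> ?A (Suc E)" using sE by (simp add: ps_avail_def)
    then show ?thesis using avail_antimono[of "Suc E" k n m P] that by auto
  qed
  have eaters: "{i. i < n \<and> ?eats k i = ostar} \<subseteq> {0, a}" if "k \<le> E" for k
  proof
    fix i assume "i \<in> {i. i < n \<and> ?eats k i = ostar}"
    then have i: "i < n" "?eats k i = ostar" by auto
    have "?eats E i = ostar" using ps_top_mono[of "P i" "?A k" ostar "?A E"] i inA[of E]
        avail_antimono[OF that, of n m P] unfolding ps_eats_def by auto
    then show "i \<in> {0, a}" using assms(13) i(1) unfolding E_def by blast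
  qed
  have cnt: "real (ps_cnt n m P k ostar) \<le> (if ?eats k 0 = ostar then 1 else 0) + 1"
    if "k \<le> E" for k
  proof (cases "?eats k 0 = ostar")
    case True
    have "card {i. i < n \<and> ?eats k i = ostar} \<le> card {0, a}"
      by (rule card_mono) (use eaters[OF that] in auto)
    also have "\<dots> \<le> 2" by (simp add: card_insert_if)
    finally show ?thesis using True unfolding ps_cnt_def by simp
  next
    case False
    have "{i. i < n \<and> ?eats k i = ostar} \<subseteq> {a}" using eaters[OF that] False by auto
    then have "card {i. i < n \<and> ?eats k i = ostar} \<le> card {a}" by (intro card_mono) auto
    then show ?thesis using False unfolding ps_cnt_def by simp
  qed
  have cons: "?s K ostar = 1 - (\<Sum>k<K. real (ps_cnt n m P k ostar) * (?tau (Suc k) - ?tau k))"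
    if "K \<le> Suc E" for K
    using that
  proof (induction K)
    case 0 then show ?case using om by (simp add: supply_0)
  next
    case (Suc K)
    have "ostar \<in> ?A K" using inA Suc.prems by simp
    then have "?A K \<noteq> {}" by auto
    then show ?case using Suc \<open>ostar \<in> ?A K\<close> by (simp add: supply_Suc time_Suc)
  qed
  have sE0: "?s (Suc E) ostar = 0" using sE supply_nonneg[OF W n] by (simp add: eq_iff)
  let ?term = "\<lambda>k. if ?eats k 0 = ostar then ?tau (Suc k) - ?tau k else 0"
  have one: "1 \<le> (\<Sum>k<Suc E. ?term k) + ?tau (Suc E)"
  proof -
    have "1 = (\<Sum>k<Suc E. real (ps_cnt n m P k ostar) * (?tau (Suc k) - ?tau k))"
      using cons[of "Suc E"] sE0 by simp
    also have "\<dots> \<le> (\<Sum>k<Suc E. ?term k + (?tau (Suc k) - ?tau k))"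
    proof (rule sum_mono)
      fix k assume "k \<in> {..<Suc E}"
      then have "real (ps_cnt n m P k ostar) * (?tau (Suc k) - ?tau k)
          \<le> ((if ?eats k 0 = ostar then 1 else 0) + 1) * (?tau (Suc k) - ?tau k)"
        using cnt[of k] delta_nonneg[OF W n, of k] by (intro mult_right_mono) auto
      then show "real (ps_cnt n m P k ostar) * (?tau (Suc k) - ?tau k)
          \<le> ?term k + (?tau (Suc k) - ?tau k)" by (simp split: if_splits)
    qed
    also have "\<dots> = (\<Sum>k<Suc E. ?term k) + ?tau (Suc E)"
      by (simp add: sum.distrib sum_lessThan_telescope time_0)
    finally show ?thesis .
  qed
  have t2_eq: "t2 = (\<Sum>k<Suc E. ?term k)"
  proof -
    have "t2 = (\<Sum>k<m. ?term k)" unfolding t2_def ps_share_def by simp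
    also have "\<dots> = (\<Sum>k<Suc E. ?term k)"
    proof (rule sum.mono_neutral_right)
      show "{..<Suc E} \<subseteq> {..<m}" using Em m0 by auto
      show "\<forall>i\<in>{..<m} - {..<Suc E}. ?term i = 0"
      proof
        fix k assume "k \<in> {..<m} - {..<Suc E}"
        then have "E < k" by auto
        show "?term k = 0"
        proof (cases "?A k = {}")
          case True then show ?thesis by (simp add: time_Suc)
        next
          case False
          have "?eats k 0 \<in> ?A k" unfolding ps_eats_def
            using ps_top_in[OF _ False] avail_sub P0 by metis
          then show ?thesis using notinA[OF \<open>E < k\<close>] by auto
        qed
      qed
    qed simp
    finally show ?thesis .
  qed
  have "(\<Sum>k<m. ?term k) \<noteq> 0" using assms(10) unfolding ps_share_def by simp
  moreover have "(\<Sum>k<m. ?term k) = 0" if "\<forall>k. ?term k = 0" using that by simp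
  ultimately obtain k0 where "?term k0 \<noteq> 0" by blast
  then have k0: "?eats k0 0 = ostar \<and> ?tau k0 < ?tau (Suc k0)"
    using delta_nonneg[OF W n, of k0] by (auto split: if_splits)
  define L where "L = (LEAST k. ?eats k 0 = ostar \<and> ?tau k < ?tau (Suc k))"
  have L: "?eats L 0 = ostar \<and> ?tau L < ?tau (Suc L)" unfolding L_def by (rule LeastI[of _ k0], rule k0)
  have bef: "?term k = 0" if "k < L" for k
    using not_less_Least[of k "\<lambda>k. ?eats k 0 = ostar \<and> ?tau k < ?tau (Suc k)"] that
      delta_nonneg[OF W n, of k] unfolding L_def[symmetric] by auto
  have LE: "L \<le> E"
  proof (rule ccontr)
    assume "\<not> L \<le> E"
    have "?A L \<noteq> {}" using L by (auto simp: time_Suc)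
    then have "?eats L 0 \<in> ?A L" unfolding ps_eats_def
      using ps_top_in avail_sub P0 by metis
    then show False using notinA[of L] L \<open>\<not> L \<le> E\<close> by auto
  qed
  have t1_eq: "t1 = ?tau L" unfolding t1_def ps_start_def L_def by simp
  have sumL: "(\<Sum>k<K. ?term k) = ?tau K - ?tau L" if "L \<le> K" "K \<le> Suc E" for K
  proof -
    have "L \<le> K \<and> K \<le> Suc E \<longrightarrow> (\<Sum>k<K. ?term k) = ?tau K - ?tau L"
    proof (induction K)
      case 0 then show ?case by simp
    next
      case (Suc K)
      show ?case
      proof
        assume h: "L \<le> Suc K \<and> Suc K \<le> Suc E"
        show "(\<Sum>k<Suc K. ?term k) = ?tau (Suc K) - ?tau L"
        proof (cases "L = Suc K")
          case True
          then show ?thesis using bef by simp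
        next
          case False
          then have LK: "L \<le> K" "K \<le> E" using h by auto
          have "?eats K 0 = ostar" using ps_top_mono[of "P 0" "?A L" ostar "?A K"] L inA[OF LK(2)]
              avail_antimono[OF LK(1), of n m P] unfolding ps_eats_def by auto
          then show ?thesis using Suc.IH LK by simp
        qed
      qed
    qed
    then show ?thesis using that by blast
  qed
  have t12: "t1 + t2 = ?tau (Suc E)" using t1_eq t2_eq sumL[of "Suc E"] LE by simp
  have "ps_exh n m P ostar \<le> T" unfolding T_def Obar_def using assms(9) Obar_def
    by (intro Max_ge) auto
  then have XT: "?tau (Suc E) \<le> T" unfolding ps_exh_def E_def by simp
  have t1nn: "0 \<le> t1" using t1_eq time_nonneg[OF W n] by simp
  have one': "1 \<le> t2 + (t1 + t2)" using one t2_eq t12 by simp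
  have a1: "1 / 2 \<le> t1 + t2" using t12 XT t1nn one' assms(7,8) by linarith
  have a2: "T - t1 - t2 < 1 / 6" using t12 XT t1nn one' assms(7,8) by linarith
  have a3: "t1 < 1 / 3" using t12 XT t1nn one' assms(7,8) by linarith
  have a4: "2 * T < 2 * t1 + 3 * t2" using t12 XT t1nn one' assms(7,8) by linarith
  have a5: "2 * (T - t1 - t2) < t2" using a4 by (simp add: algebra_simps)
  show ?thesis unfolding t3_def using a1 a2 a3 a5 by blast
qed

end
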